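(* Let $\Delta$ be a finite abstract simplicial complex of dimension $d\ge0$ and $\Delta^{(k)}$ its $k$-fold iterated barycentric subdivision. For each $0\le i\le d$ there are rational numbers $C_{j,i}$ ($0\le j\le d-i$), independent of $k$, such that for all $k\ge0$ $$f^{\Delta^{(k)}}_i=\sum_{j=0}^{d-i}C_{j,i}\,(d+1-j)!^k,$$ and $C_{0,i}=f^\Delta_dF_{i,d}$. Consequently $f^{\Delta^{(k)}}_i=f^\Delta_dF_{i,d}(d+1)!^k+O(d!^k)$ as $k\to\infty$.
   Context: An abstract simplicial complex $\Delta$ on a finite set is a family of subsets closed under taking subsets (the empty set included); a $d$-simplex is a member of cardinality $d+1$, and $\dim\Delta$ is the largest such $d$. $f^\Delta_i$ denotes the number of $i$-simplices. The barycentric subdivision $\Delta'$ is the complex consisting of $\emptyset$ together with all sets $\{\sigma_0,\dots,\sigma_n\}$ ($n\ge0$) of nonempty simplices of $\Delta$ with $\sigma_0\subsetneq\cdots\subsetneq\sigma_n$; $\Delta^{(0)}=\Delta$, $\Delta^{(k+1)}=(\Delta^{(k)})'$. For integers $i,d\ge -1$ define $f_{-1,-1}=1$, $f_{-1,d}=0$ for $d\ge0$, $f_{i,-1}=0$ for $i\ge0$, and $f_{i,d}=(i+1)!\,S(d+1,i+1)$ for $i,d\ge0$ ($S$ = Stirling numbers of the second kind). For $d\ge0$ define $F_{d,d}=1$ and recursively for $-1\le i\le d-1$, $F_{i,d}=\frac{1}{(d+1)!-(i+1)!}\sum_{j=i+1}^{d}f_{i,j}F_{j,d}$. *)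

theory Defs
  imports Complex_Main "HOL-Library.FSet" "HOL-Library.Landau_Symbols" "HOL-Combinatorics.Stirling"
begin

definition simplicial_complex :: "'a set set \<Rightarrow> bool" where
  "simplicial_complex K \<longleftrightarrow> {} \<in> K \<and> (\<forall>\<sigma>\<in>K. \<forall>\<tau>. \<tau> \<subseteq> \<sigma> \<longrightarrow> \<tau> \<in> K)"

definition fnum :: "'a set set \<Rightarrow> nat \<Rightarrow> nat" where
  "fnum K i = card {\<sigma>\<in>K. card \<sigma> = i + 1}"

definition has_dim :: "'a set set \<Rightarrow> nat \<Rightarrow> bool" where
  "has_dim K d \<longleftrightarrow> (\<exists>\<sigma>\<in>K. card \<sigma> = d + 1) \<and> (\<forall>\<sigma>\<in>K. finite \<sigma> \<and> card \<sigma> \<le> d + 1)"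

definition bsd :: "'a set set \<Rightarrow> 'a set set set" where
  "bsd K = insert {} {c. c \<noteq> {} \<and> finite c \<and> c \<subseteq> K - {{}} \<and>
                         (\<forall>\<sigma>\<in>c. \<forall>\<tau>\<in>c. \<sigma> \<subseteq> \<tau> \<or> \<tau> \<subseteq> \<sigma>)}"

text \<open>Since the vertex type changes with each subdivision, iterated subdivisions are
  taken in a universal vertex type: a vertex is either an original vertex or (a label of)
  a finite set of vertices. Relabelling via the injective map vert does not change f-vectors.\<close>
datatype 'a vx = V 'a | S "'a vx fset"

definition vert :: "'a vx set \<Rightarrow> 'a vx" where
  "vert \<sigma> = S (Abs_fset \<sigma>)"

fun bsd_iter :: "nat \<Rightarrow> 'a set set \<Rightarrow> 'a vx set set" where
  "bsd_iter 0 K = (\<lambda>\<sigma>. V ` \<sigma>) ` K"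
| "bsd_iter (Suc k) K = (\<lambda>c. vert ` c) ` bsd (bsd_iter k K)"

definition fsmall :: "int \<Rightarrow> int \<Rightarrow> rat" where
  "fsmall i d = (if i = -1 \<and> d = -1 then 1
                 else if i = -1 \<or> d = -1 then 0
                 else fact (nat i + 1) * of_nat (Stirling (nat d + 1) (nat i + 1)))"

function Fbig :: "int \<Rightarrow> int \<Rightarrow> rat" where
  "Fbig i d = (if d < 0 \<or> i < -1 \<or> i > d then 0
               else if i = d then 1
               else (1 / (fact (nat (d + 1)) - fact (nat (i + 1)))) *
                    (\<Sum>j\<in>{i+1..d}. fsmall i j * Fbig j d))"
  by pat_completeness auto
termination
  by (relation "measure (\<lambda>(i, d). nat (d - i))") auto

end

theory Submission
  imports Defs "HOL-Library.FuncSet"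
begin

lemma card_surj:
  assumes "finite A" "finite B"
  shows "card {f \<in> A \<rightarrow>\<^sub>E B. f ` A = B} = fact (card B) * Stirling (card A) (card B)"
  using assms
proof (induction A arbitrary: B rule: finite_induct)
  case empty
  have "{f \<in> {} \<rightarrow>\<^sub>E B. f ` {} = B} = (if B = {} then {\<lambda>_. undefined} else {})"
    by auto
  then show ?case using empty by (cases "card B") auto
next
  case (insert x A)
  define T where "T = (\<lambda>y. {g \<in> A \<rightarrow>\<^sub>E B. insert y (g ` A) = B})"
  have eq: "{f \<in> insert x A \<rightarrow>\<^sub>E B. f ` insert x A = B} = (\<lambda>(y, g). g(x := y)) ` Sigma B T"
  proof
    show "{f \<in> insert x A \<rightarrow>\<^sub>E B. f ` insert x A = B} \<subseteq> (\<lambda>(y, g). g(x := y)) ` Sigma B T"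
    proof
      fix f assume f: "f \<in> {f \<in> insert x A \<rightarrow>\<^sub>E B. f ` insert x A = B}"
      then have "f \<in> (\<lambda>(y, g). g(x := y)) ` (B \<times> (A \<rightarrow>\<^sub>E B))"
        using PiE_insert_eq[of x A "\<lambda>_. B"] by auto
      then obtain y g where yg: "y \<in> B" "g \<in> A \<rightarrow>\<^sub>E B" "f = g(x := y)" by auto
      have "(g(x:=y)) ` A = g ` A" using insert(2) by (auto intro!: image_cong)
      then have "insert y (g ` A) = B" using f yg by auto
      then show "f \<in> (\<lambda>(y, g). g(x := y)) ` Sigma B T" using yg unfolding T_def by auto
    qed
  next
    show "(\<lambda>(y, g). g(x := y)) ` Sigma B T \<subseteq> {f \<in> insert x A \<rightarrow>\<^sub>E B. f ` insert x A = B}"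
    proof
      fix f assume "f \<in> (\<lambda>(y, g). g(x := y)) ` Sigma B T"
      then obtain y g where yg: "y \<in> B" "g \<in> A \<rightarrow>\<^sub>E B" "insert y (g ` A) = B" "f = g(x := y)"
        unfolding T_def by auto
      have "(g(x:=y)) ` A = g ` A" using insert(2) by (auto intro!: image_cong)
      then have "f ` insert x A = B" using yg by auto
      moreover have "f \<in> insert x A \<rightarrow>\<^sub>E B"
        using PiE_insert_eq[of x A "\<lambda>_. B"] yg by auto
      ultimately show "f \<in> {f \<in> insert x A \<rightarrow>\<^sub>E B. f ` insert x A = B}" by auto
    qed
  qed
  have inj: "inj_on (\<lambda>(y, g). g(x := y)) (Sigma B T)"
    by (rule inj_on_subset[OF inj_combinator[OF insert(2), of "\<lambda>_. B"]]) (auto simp: T_def)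
  have Tsplit: "T y = {g \<in> A \<rightarrow>\<^sub>E B. g ` A = B} \<union> {g \<in> A \<rightarrow>\<^sub>E (B - {y}). g ` A = B - {y}}"
    if "y \<in> B" for y
    using that unfolding T_def by (auto simp: PiE_iff)
  have finT: "finite (T y)" for y
    unfolding T_def by (rule finite_subset[of _ "A \<rightarrow>\<^sub>E B"]) (auto intro!: finite_PiE insert)
  have cardT: "card (T y) = fact (card B) * Stirling (card A) (card B)
       + fact (card B - 1) * Stirling (card A) (card B - 1)" if "y \<in> B" for y
  proof -
    have "card (T y) = card {g \<in> A \<rightarrow>\<^sub>E B. g ` A = B} + card {g \<in> A \<rightarrow>\<^sub>E (B - {y}). g ` A = B - {y}}"
      unfolding Tsplit[OF that]
    proof (rule card_Un_disjoint)
      show "finite {g \<in> A \<rightarrow>\<^sub>E B. g ` A = B}"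
        by (rule finite_subset[of _ "A \<rightarrow>\<^sub>E B"]) (auto intro!: finite_PiE insert)
      show "finite {g \<in> A \<rightarrow>\<^sub>E (B - {y}). g ` A = B - {y}}"
        by (rule finite_subset[of _ "A \<rightarrow>\<^sub>E (B - {y})"]) (auto intro!: finite_PiE insert)
      show "{g \<in> A \<rightarrow>\<^sub>E B. g ` A = B} \<inter> {g \<in> A \<rightarrow>\<^sub>E (B - {y}). g ` A = B - {y}} = {}"
        using that by auto
    qed
    then show ?thesis using insert that by (simp add: card_Diff_singleton)
  qed
  have "card {f \<in> insert x A \<rightarrow>\<^sub>E B. f ` insert x A = B} = card (Sigma B T)"
    unfolding eq by (rule card_image[OF inj])
  also have "\<dots> = (\<Sum>y\<in>B. card (T y))"
    by (rule card_SigmaI) (auto intro: insert finT)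
  also have "\<dots> = card B * (fact (card B) * Stirling (card A) (card B)
       + fact (card B - 1) * Stirling (card A) (card B - 1))"
    using cardT by simp
  also have "\<dots> = fact (card B) * Stirling (card (insert x A)) (card B)"
  proof (cases "card B")
    case 0 then show ?thesis using insert by simp
  next
    case (Suc m)
    then show ?thesis using insert by (simp add: algebra_simps)
  qed
  finally show ?case .
qed

definition chains :: "'a set \<Rightarrow> nat \<Rightarrow> 'a set set set" where
  "chains \<tau> m = {c. finite c \<and> c \<subseteq> Pow \<tau> - {{}} \<and> (\<forall>\<sigma>\<in>c. \<forall>\<rho>\<in>c. \<sigma> \<subseteq> \<rho> \<or> \<rho> \<subseteq> \<sigma>)
      \<and> \<tau> \<in> c \<and> card c = Suc m}"

lemma card_chains:
  assumes fin: "finite \<tau>"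
  shows "card (chains \<tau> m) = fact (Suc m) * Stirling (card \<tau>) (Suc m)"
proof -
  define L where "L = (\<lambda>(f::'a \<Rightarrow> nat) l. {x \<in> \<tau>. f x \<le> l})"
  define Sj where "Sj = {f \<in> \<tau> \<rightarrow>\<^sub>E {..m}. f ` \<tau> = {..m}}"
  define \<Phi> where "\<Phi> = (\<lambda>f. L f ` {..m})"
  have injL: "inj_on (L f) {..m}" if f: "f \<in> Sj" for f
  proof (rule linorder_inj_onI')
    fix l l' assume ll: "l \<in> {..m}" "l' \<in> {..m}" "l < l'"
    have "l' \<in> f ` \<tau>" using f ll unfolding Sj_def by auto
    then obtain x where "x \<in> \<tau>" "f x = l'" by auto
    then have "x \<in> L f l'" "x \<notin> L f l" using ll unfolding L_def by auto
    then show "L f l \<noteq> L f l'" by blast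
  qed
  have fx: "f x = card {\<sigma> \<in> \<Phi> f. x \<notin> \<sigma>}" if f: "f \<in> Sj" and x: "x \<in> \<tau>" for f x
  proof -
    have fxm: "f x \<le> m" using f x unfolding Sj_def by auto
    have "{\<sigma> \<in> \<Phi> f. x \<notin> \<sigma>} = L f ` {..<f x}"
      using fxm x unfolding \<Phi>_def L_def by auto
    moreover have "inj_on (L f) {..<f x}"
      by (rule inj_on_subset[OF injL[OF f]]) (use fxm in auto)
    ultimately show ?thesis by (simp add: card_image)
  qed
  have inj: "inj_on \<Phi> Sj"
  proof
    fix f g assume f: "f \<in> Sj" and g: "g \<in> Sj" and eq: "\<Phi> f = \<Phi> g"
    show "f = g"
    proof (rule extensionalityI[of _ \<tau>])
      show "f \<in> extensional \<tau>" "g \<in> extensional \<tau>" using f g unfolding Sj_def by (auto simp: PiE_def)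
      fix x assume "x \<in> \<tau>" then show "f x = g x" using fx[OF f] fx[OF g] eq by simp
    qed
  qed
  have into: "\<Phi> f \<in> chains \<tau> m" if f: "f \<in> Sj" for f
  proof -
    have ne: "L f l \<noteq> {}" if "l \<le> m" for l
    proof -
      have "l \<in> f ` \<tau>" using f \<open>l \<le> m\<close> unfolding Sj_def by auto
      then obtain x where "x \<in> \<tau>" "f x = l" by auto
      then show ?thesis unfolding L_def by auto
    qed
    have top: "L f m = \<tau>" using f unfolding Sj_def L_def by auto
    show ?thesis unfolding chains_def \<Phi>_def
    proof (intro CollectI conjI)
      show "finite (L f ` {..m})" by simp
      show "L f ` {..m} \<subseteq> Pow \<tau> - {{}}" using ne unfolding L_def by auto
      show "\<forall>\<sigma>\<in>L f ` {..m}. \<forall>\<rho>\<in>L f ` {..m}. \<sigma> \<subseteq> \<rho> \<or> \<rho> \<subseteq> \<sigma>"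
      proof (intro ballI)
        fix \<sigma> \<rho> assume "\<sigma> \<in> L f ` {..m}" "\<rho> \<in> L f ` {..m}"
        then obtain l l' where ll: "\<sigma> = L f l" "\<rho> = L f l'" by blast
        have mono: "L f a \<subseteq> L f b" if "a \<le> b" for a b using that unfolding L_def by auto
        show "\<sigma> \<subseteq> \<rho> \<or> \<rho> \<subseteq> \<sigma>" using ll mono nat_le_linear by metis
      qed
      show "\<tau> \<in> L f ` {..m}" using top by (metis atMost_iff image_eqI order_refl)
      show "card (L f ` {..m}) = Suc m" using card_image[OF injL[OF f]] by simp
    qed
  qed
  have onto: "c \<in> \<Phi> ` Sj" if c: "c \<in> chains \<tau> m" for c
  proof -
    from c have cfin: "finite c" and csub: "c \<subseteq> Pow \<tau> - {{}}"
      and cch: "\<forall>\<sigma>\<in>c. \<forall>\<rho>\<in>c. \<sigma> \<subseteq> \<rho> \<or> \<rho> \<subseteq> \<sigma>" and ctop: "\<tau> \<in> c" and ccard: "card c = Suc m"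
      unfolding chains_def by auto
    define g where "g = restrict (\<lambda>x. card {\<rho> \<in> c. x \<notin> \<rho>}) \<tau>"
    define ell where "ell = (\<lambda>\<sigma>. card {\<rho> \<in> c. \<rho> \<subset> \<sigma>})"
    have gm: "g x \<le> m" if "x \<in> \<tau>" for x
    proof -
      have "{\<rho> \<in> c. x \<notin> \<rho>} \<subseteq> c - {\<tau>}" using that by auto
      then have "card {\<rho> \<in> c. x \<notin> \<rho>} \<le> card (c - {\<tau>})" by (intro card_mono) (use cfin in auto)
      then show ?thesis using that ccard ctop cfin by (simp add: g_def card_Diff_singleton)
    qed
    have ellm: "ell \<sigma> \<le> m" if "\<sigma> \<in> c" for \<sigma>
    proof -
      have "{\<rho> \<in> c. \<rho> \<subset> \<sigma>} \<subseteq> c - {\<sigma>}" by auto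
      then have "ell \<sigma> \<le> card (c - {\<sigma>})" unfolding ell_def by (intro card_mono) (use cfin in auto)
      then show ?thesis using that ccard cfin by (simp add: card_Diff_singleton)
    qed
    have Lell: "\<sigma> = L g (ell \<sigma>)" if s: "\<sigma> \<in> c" for \<sigma>
    proof
      show "\<sigma> \<subseteq> L g (ell \<sigma>)"
      proof
        fix x assume x: "x \<in> \<sigma>"
        then have xt: "x \<in> \<tau>" using s csub by auto
        have "{\<rho> \<in> c. x \<notin> \<rho>} \<subseteq> {\<rho> \<in> c. \<rho> \<subset> \<sigma>}" using cch s x by blast
        then have "card {\<rho> \<in> c. x \<notin> \<rho>} \<le> ell \<sigma>" unfolding ell_def by (intro card_mono) (use cfin in auto)
        then show "x \<in> L g (ell \<sigma>)" using xt unfolding L_def g_def by auto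
      qed
    next
      show "L g (ell \<sigma>) \<subseteq> \<sigma>"
      proof
        fix x assume x: "x \<in> L g (ell \<sigma>)"
        then have xt: "x \<in> \<tau>" and le: "card {\<rho> \<in> c. x \<notin> \<rho>} \<le> ell \<sigma>" unfolding L_def g_def by auto
        show "x \<in> \<sigma>"
        proof (rule ccontr)
          assume xs: "x \<notin> \<sigma>"
          have "insert \<sigma> {\<rho> \<in> c. \<rho> \<subset> \<sigma>} \<subseteq> {\<rho> \<in> c. x \<notin> \<rho>}" using xs s by auto
          then have "card (insert \<sigma> {\<rho> \<in> c. \<rho> \<subset> \<sigma>}) \<le> card {\<rho> \<in> c. x \<notin> \<rho>}"
            by (intro card_mono) (use cfin in auto)
          moreover have "card (insert \<sigma> {\<rho> \<in> c. \<rho> \<subset> \<sigma>}) = Suc (ell \<sigma>)"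
            unfolding ell_def by (subst card_insert_disjoint) (use cfin in auto)
          ultimately show False using le by simp
        qed
      qed
    qed
    have csub2: "c \<subseteq> \<Phi> g"
    proof
      fix \<sigma> assume s: "\<sigma> \<in> c"
      then have "ell \<sigma> \<in> {..m}" using ellm by simp
      then show "\<sigma> \<in> \<Phi> g" unfolding \<Phi>_def using Lell[OF s] by (rule rev_image_eqI)
    qed
    have ceq: "c = \<Phi> g"
    proof (rule card_subset_eq)
      show "finite (\<Phi> g)" unfolding \<Phi>_def by simp
      show "c \<subseteq> \<Phi> g" by (rule csub2)
      have "card (\<Phi> g) \<le> card {..m}" unfolding \<Phi>_def by (rule card_image_le) simp
      moreover have "card c \<le> card (\<Phi> g)" by (rule card_mono) (simp add: \<Phi>_def, rule csub2)
      ultimately show "card c = card (\<Phi> g)" using ccard by simp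
    qed
    have injLg: "inj_on (L g) {..m}"
    proof (rule eq_card_imp_inj_on)
      show "finite {..m}" by simp
      show "card (L g ` {..m}) = card {..m}" using ceq ccard unfolding \<Phi>_def by simp
    qed
    have gS: "g \<in> Sj"
    proof -
      have "g \<in> \<tau> \<rightarrow>\<^sub>E {..m}" using gm by (auto simp: g_def)
      moreover have "g ` \<tau> = {..m}"
      proof
        show "g ` \<tau> \<subseteq> {..m}" using gm by auto
        show "{..m} \<subseteq> g ` \<tau>"
        proof
          fix l assume l: "l \<in> {..m}"
          show "l \<in> g ` \<tau>"
          proof (cases l)
            case 0
            have "L g 0 \<in> c" using ceq unfolding \<Phi>_def by auto
            then obtain x where "x \<in> L g 0" using csub by blast
            then have "x \<in> \<tau>" "g x = l" using 0 unfolding L_def by auto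
            then show ?thesis using image_eqI[of l g x \<tau>] by simp
          next
            case (Suc l')
            have "L g l' \<noteq> L g l"
            proof
              assume "L g l' = L g l"
              then have "l' = l" using inj_onD[OF injLg] l Suc by simp
              then show False using Suc by simp
            qed
            moreover have "L g l' \<subseteq> L g l" using Suc unfolding L_def by auto
            ultimately obtain x where "x \<in> L g l" "x \<notin> L g l'" by blast
            then have "x \<in> \<tau>" "g x = l" using Suc unfolding L_def by auto
            then show ?thesis using image_eqI[of l g x \<tau>] by simp
          qed
        qed
      qed
      ultimately show ?thesis unfolding Sj_def by simp
    qed
    show ?thesis using ceq gS by blast
  qed
  have "bij_betw \<Phi> Sj (chains \<tau> m)"
    unfolding bij_betw_def using inj into onto by blast
  then have "card (chains \<tau> m) = card Sj" by (simp add: bij_betw_same_card)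
  also have "\<dots> = fact (Suc m) * Stirling (card \<tau>) (Suc m)"
    unfolding Sj_def using card_surj[OF fin, of "{..m}"] by simp
  finally show ?thesis .
qed

definition good :: "'a set set \<Rightarrow> nat \<Rightarrow> bool" where
  "good K d \<longleftrightarrow> finite K \<and> simplicial_complex K \<and> (\<forall>\<sigma>\<in>K. finite \<sigma> \<and> card \<sigma> \<le> Suc d)"

lemma fnum_bsd:
  assumes g: "good K d"
  shows "fnum (bsd K) i = (\<Sum>j\<le>d. fact (Suc i) * Stirling (Suc j) (Suc i) * fnum K j)"
proof -
  from g have Kfin: "finite K" and sc: "simplicial_complex K"
    and Kel: "\<And>\<sigma>. \<sigma> \<in> K \<Longrightarrow> finite \<sigma> \<and> card \<sigma> \<le> Suc d"
    unfolding good_def by auto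
  have cl: "\<tau> \<in> K" if "\<tau> \<subseteq> \<sigma>" "\<sigma> \<in> K" for \<tau> \<sigma>
    using sc that unfolding simplicial_complex_def by blast
  define I where "I = K - {{}}"
  have eq: "{c \<in> bsd K. card c = i + 1} = (\<Union>\<tau>\<in>I. chains \<tau> i)"
  proof
    show "{c \<in> bsd K. card c = i + 1} \<subseteq> (\<Union>\<tau>\<in>I. chains \<tau> i)"
    proof
      fix c assume "c \<in> {c \<in> bsd K. card c = i + 1}"
      then have cb: "c \<in> bsd K" and cc: "card c = Suc i" by auto
      then have cne: "c \<noteq> {}" by auto
      with cb have cfin: "finite c" and csub: "c \<subseteq> K - {{}}"
        and cch: "\<forall>\<sigma>\<in>c. \<forall>\<tau>\<in>c. \<sigma> \<subseteq> \<tau> \<or> \<tau> \<subseteq> \<sigma>"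
        unfolding bsd_def by auto
      define M where "M = Max (card ` c)"
      have "M \<in> card ` c" unfolding M_def using cfin cne by (intro Max_in) auto
      then obtain \<tau> where \<tau>c: "\<tau> \<in> c" and ct: "card \<tau> = M" by auto
      have le: "card \<sigma> \<le> card \<tau>" if "\<sigma> \<in> c" for \<sigma>
        unfolding ct M_def using cfin that by (intro Max_ge) auto
      have sub: "\<sigma> \<subseteq> \<tau>" if s: "\<sigma> \<in> c" for \<sigma>
      proof -
        have "\<sigma> \<subseteq> \<tau> \<or> \<tau> \<subseteq> \<sigma>" using cch s \<tau>c by blast
        moreover have "finite \<sigma>" using s csub Kel by blast
        moreover have "\<tau> \<subseteq> \<sigma> \<Longrightarrow> \<tau> = \<sigma>"
        proof -
          assume ts: "\<tau> \<subseteq> \<sigma>"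
          have "card \<tau> \<le> card \<sigma>" using card_mono[OF \<open>finite \<sigma>\<close> ts] .
          then have "card \<tau> = card \<sigma>" using le[OF s] by simp
          then show "\<tau> = \<sigma>" using card_subset_eq[OF \<open>finite \<sigma>\<close> ts] by simp
        qed
        ultimately show ?thesis by auto
      qed
      have "c \<in> chains \<tau> i"
        unfolding chains_def using cfin csub cch \<tau>c cc sub by auto
      moreover have "\<tau> \<in> I" using \<tau>c csub unfolding I_def by auto
      ultimately show "c \<in> (\<Union>\<tau>\<in>I. chains \<tau> i)" by blast
    qed
  next
    show "(\<Union>\<tau>\<in>I. chains \<tau> i) \<subseteq> {c \<in> bsd K. card c = i + 1}"
    proof
      fix c assume "c \<in> (\<Union>\<tau>\<in>I. chains \<tau> i)"
      then obtain \<tau> where tI: "\<tau> \<in> I" and cch: "c \<in> chains \<tau> i" by blast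
      from cch have "c \<subseteq> Pow \<tau> - {{}}" "\<tau> \<in> c" "finite c" "card c = Suc i"
        "\<forall>\<sigma>\<in>c. \<forall>\<rho>\<in>c. \<sigma> \<subseteq> \<rho> \<or> \<rho> \<subseteq> \<sigma>"
        unfolding chains_def by auto
      moreover have "Pow \<tau> - {{}} \<subseteq> K - {{}}" using tI cl unfolding I_def by blast
      ultimately have "c \<subseteq> K - {{}}" "c \<noteq> {}" "finite c" "card c = i + 1"
        "\<forall>\<sigma>\<in>c. \<forall>\<rho>\<in>c. \<sigma> \<subseteq> \<rho> \<or> \<rho> \<subseteq> \<sigma>" by auto
      then show "c \<in> {c \<in> bsd K. card c = i + 1}" unfolding bsd_def by blast
    qed
  qed
  have finI: "finite I" unfolding I_def using Kfin by simp
  have finch: "finite (chains \<tau> i)" if "\<tau> \<in> I" for \<tau>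
  proof (rule finite_subset[of _ "Pow (Pow \<tau>)"])
    show "chains \<tau> i \<subseteq> Pow (Pow \<tau>)" unfolding chains_def by auto
    show "finite (Pow (Pow \<tau>))" using that Kel unfolding I_def by auto
  qed
  have disj: "chains \<tau>1 i \<inter> chains \<tau>2 i = {}" if "\<tau>1 \<noteq> \<tau>2" for \<tau>1 \<tau>2
  proof (rule ccontr)
    assume "chains \<tau>1 i \<inter> chains \<tau>2 i \<noteq> {}"
    then obtain c where "c \<in> chains \<tau>1 i" "c \<in> chains \<tau>2 i" by blast
    then have "\<tau>1 \<subseteq> \<tau>2" "\<tau>2 \<subseteq> \<tau>1" unfolding chains_def by auto
    then show False using that by simp
  qed
  have "fnum (bsd K) i = card (\<Union>\<tau>\<in>I. chains \<tau> i)"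
    unfolding fnum_def eq ..
  also have "\<dots> = (\<Sum>\<tau>\<in>I. card (chains \<tau> i))"
  proof (rule card_UN_disjoint)
    show "finite I" by (rule finI)
    show "\<forall>\<tau>\<in>I. finite (chains \<tau> i)" using finch by simp
    show "\<forall>a\<in>I. \<forall>b\<in>I. a \<noteq> b \<longrightarrow> chains a i \<inter> chains b i = {}"
      by (intro ballI impI disj)
  qed
  also have "\<dots> = (\<Sum>\<tau>\<in>I. fact (Suc i) * Stirling (card \<tau>) (Suc i))"
    by (rule sum.cong) (use card_chains Kel in \<open>auto simp: I_def\<close>)
  also have "\<dots> = (\<Sum>j\<le>d. \<Sum>\<tau>\<in>{x. x \<in> I \<and> card x - 1 = j}. fact (Suc i) * Stirling (card \<tau>) (Suc i))"
    by (rule sum.group[symmetric]) (use finI in \<open>auto simp: I_def dest!: Kel\<close>)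
  also have "\<dots> = (\<Sum>j\<le>d. fact (Suc i) * Stirling (Suc j) (Suc i) * fnum K j)"
  proof (rule sum.cong[OF refl])
    fix j
    have seq: "{x. x \<in> I \<and> card x - 1 = j} = {\<sigma> \<in> K. card \<sigma> = j + 1}"
    proof (intro set_eqI iffI)
      fix x assume "x \<in> {x. x \<in> I \<and> card x - 1 = j}"
      then have "x \<in> K" "x \<noteq> {}" "finite x" "card x - 1 = j" using Kel unfolding I_def by auto
      then show "x \<in> {\<sigma> \<in> K. card \<sigma> = j + 1}" by (cases "card x") auto
    next
      fix x assume "x \<in> {\<sigma> \<in> K. card \<sigma> = j + 1}"
      then show "x \<in> {x. x \<in> I \<and> card x - 1 = j}" unfolding I_def by auto
    qed
    show "(\<Sum>\<tau>\<in>{x. x \<in> I \<and> card x - 1 = j}. fact (Suc i) * Stirling (card \<tau>) (Suc i))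
        = fact (Suc i) * Stirling (Suc j) (Suc i) * fnum K j"
      unfolding seq fnum_def by simp
  qed
  finally show ?thesis .
qed

lemma good_bsd:
  assumes g: "good K d"
  shows "good (bsd K) d"
proof -
  from g have Kfin: "finite K" and sc: "simplicial_complex K"
    and Kel: "\<And>\<sigma>. \<sigma> \<in> K \<Longrightarrow> finite \<sigma> \<and> card \<sigma> \<le> Suc d"
    unfolding good_def by auto
  have "bsd K \<subseteq> Pow K" unfolding bsd_def by auto
  moreover have "finite (Pow K)" using Kfin by simp
  ultimately have fin: "finite (bsd K)" by (rule finite_subset)
  have sc2: "simplicial_complex (bsd K)"
    unfolding simplicial_complex_def
  proof (intro conjI ballI allI impI)
    show "{} \<in> bsd K" unfolding bsd_def by simp
    fix c \<tau> assume c: "c \<in> bsd K" and t: "\<tau> \<subseteq> c"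
    show "\<tau> \<in> bsd K"
    proof (cases "\<tau> = {}")
      case True then show ?thesis unfolding bsd_def by simp
    next
      case False
      then have "c \<noteq> {}" using t by auto
      then have "finite c" "c \<subseteq> K - {{}}" "\<forall>\<sigma>\<in>c. \<forall>\<rho>\<in>c. \<sigma> \<subseteq> \<rho> \<or> \<rho> \<subseteq> \<sigma>"
        using c unfolding bsd_def by auto
      then have "finite \<tau>" "\<tau> \<subseteq> K - {{}}" "\<forall>\<sigma>\<in>\<tau>. \<forall>\<rho>\<in>\<tau>. \<sigma> \<subseteq> \<rho> \<or> \<rho> \<subseteq> \<sigma>"
        using t finite_subset by blast+
      then show ?thesis using False unfolding bsd_def by blast
    qed
  qed
  have el: "finite c \<and> card c \<le> Suc d" if c: "c \<in> bsd K" for c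
  proof (cases "c = {}")
    case True then show ?thesis by simp
  next
    case False
    then have cfin: "finite c" and csub: "c \<subseteq> K - {{}}" and cch: "\<forall>\<sigma>\<in>c. \<forall>\<rho>\<in>c. \<sigma> \<subseteq> \<rho> \<or> \<rho> \<subseteq> \<sigma>"
      using c unfolding bsd_def by auto
    have inj: "inj_on card c"
    proof
      fix \<sigma> \<rho> assume s: "\<sigma> \<in> c" and r: "\<rho> \<in> c" and eq: "card \<sigma> = card \<rho>"
      have fs: "finite \<sigma>" "finite \<rho>" using s r csub Kel by blast+
      have "\<sigma> \<subseteq> \<rho> \<or> \<rho> \<subseteq> \<sigma>" using cch s r by blast
      then show "\<sigma> = \<rho>"
      proof
        assume a: "\<sigma> \<subseteq> \<rho>" then show ?thesis using card_subset_eq[OF fs(2) a] eq by simp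
      next
        assume a: "\<rho> \<subseteq> \<sigma>" then show ?thesis using card_subset_eq[OF fs(1) a] eq by simp
      qed
    qed
    have "card ` c \<subseteq> {1..Suc d}"
    proof
      fix n assume "n \<in> card ` c"
      then obtain \<sigma> where s: "\<sigma> \<in> c" "n = card \<sigma>" by blast
      then have "\<sigma> \<in> K" "\<sigma> \<noteq> {}" using csub by auto
      then show "n \<in> {1..Suc d}" using s Kel[of \<sigma>] by (auto simp: Suc_le_eq card_gt_0_iff)
    qed
    then have "card (card ` c) \<le> card {1..Suc d}" by (intro card_mono) auto
    then show ?thesis using card_image[OF inj] cfin by simp
  qed
  show ?thesis unfolding good_def using fin sc2 el by blast
qed

lemma good_img:
  assumes g: "good K d" and inj: "inj_on h (\<Union>K)"
  shows "good ((\<lambda>\<sigma>. h ` \<sigma>) ` K) d \<and> fnum ((\<lambda>\<sigma>. h ` \<sigma>) ` K) i = fnum K i"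
proof -
  from g have Kfin: "finite K" and sc: "simplicial_complex K"
    and Kel: "\<And>\<sigma>. \<sigma> \<in> K \<Longrightarrow> finite \<sigma> \<and> card \<sigma> \<le> Suc d"
    unfolding good_def by auto
  have ci: "card (h ` \<sigma>) = card \<sigma>" if "\<sigma> \<in> K" for \<sigma>
    by (rule card_image, rule inj_on_subset[OF inj]) (use that in auto)
  have sc2: "simplicial_complex ((\<lambda>\<sigma>. h ` \<sigma>) ` K)"
    unfolding simplicial_complex_def
  proof (intro conjI ballI allI impI)
    show "{} \<in> (\<lambda>\<sigma>. h ` \<sigma>) ` K" using sc unfolding simplicial_complex_def by force
    fix s \<tau> assume s: "s \<in> (\<lambda>\<sigma>. h ` \<sigma>) ` K" and t: "\<tau> \<subseteq> s"
    then obtain \<sigma> where \<sigma>: "\<sigma> \<in> K" "s = h ` \<sigma>" by blast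
    have "\<tau> = h ` (\<sigma> \<inter> h -` \<tau>)" using t \<sigma> by auto
    moreover have "\<sigma> \<inter> h -` \<tau> \<in> K" using sc \<sigma> unfolding simplicial_complex_def by blast
    ultimately show "\<tau> \<in> (\<lambda>\<sigma>. h ` \<sigma>) ` K" by blast
  qed
  have g2: "good ((\<lambda>\<sigma>. h ` \<sigma>) ` K) d"
    unfolding good_def using Kfin sc2 Kel ci by auto
  have injK: "inj_on (\<lambda>\<sigma>. h ` \<sigma>) K"
    by (rule inj_on_subset[OF inj_on_image_Pow[OF inj]]) auto
  have "{s \<in> (\<lambda>\<sigma>. h ` \<sigma>) ` K. card s = i + 1} = (\<lambda>\<sigma>. h ` \<sigma>) ` {\<sigma> \<in> K. card \<sigma> = i + 1}"
    using ci by auto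
  then have "fnum ((\<lambda>\<sigma>. h ` \<sigma>) ` K) i = card ((\<lambda>\<sigma>. h ` \<sigma>) ` {\<sigma> \<in> K. card \<sigma> = i + 1})"
    unfolding fnum_def by simp
  also have "\<dots> = fnum K i" unfolding fnum_def
    by (rule card_image, rule inj_on_subset[OF injK]) auto
  finally show ?thesis using g2 by simp
qed

lemma bsd_Union_fin:
  assumes "good K d" shows "\<Union>(bsd K) \<subseteq> {\<sigma>. finite \<sigma>}"
  using assms unfolding good_def bsd_def by auto

lemma vert_inj: "inj_on vert {\<sigma>. finite \<sigma>}"
  unfolding vert_def by (rule inj_onI) (simp add: Abs_fset_inject)

lemma iter_props:
  assumes g: "good \<Delta> d"
  shows "good (bsd_iter k \<Delta>) d \<and> (\<forall>i. fnum (bsd_iter (Suc k) \<Delta>) i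
           = (\<Sum>j\<le>d. fact (Suc i) * Stirling (Suc j) (Suc i) * fnum (bsd_iter k \<Delta>) j))"
proof (induction k)
  case 0
  have g0: "good (bsd_iter 0 \<Delta>) d" using good_img[OF g, of V] by (simp add: inj_on_def)
  show ?case
  proof (intro conjI allI)
    show "good (bsd_iter 0 \<Delta>) d" by (rule g0)
  next
    fix i
    have gb: "good (bsd (bsd_iter 0 \<Delta>)) d" by (rule good_bsd[OF g0])
    have ivv: "inj_on vert (\<Union>(bsd (bsd_iter 0 \<Delta>)))"
      by (rule inj_on_subset[OF vert_inj]) (rule bsd_Union_fin[OF g0])
    then have "fnum (bsd_iter (Suc 0) \<Delta>) i = fnum (bsd (bsd_iter 0 \<Delta>)) i"
      using good_img[OF gb ivv, where i=i] by simp
    then show "fnum (bsd_iter (Suc 0) \<Delta>) i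
           = (\<Sum>j\<le>d. fact (Suc i) * Stirling (Suc j) (Suc i) * fnum (bsd_iter 0 \<Delta>) j)"
      using fnum_bsd[OF g0] by simp
  qed
next
  case (Suc k)
  have gk: "good (bsd_iter k \<Delta>) d" using Suc by simp
  have gb: "good (bsd (bsd_iter k \<Delta>)) d" by (rule good_bsd[OF gk])
  have ivv: "inj_on vert (\<Union>(bsd (bsd_iter k \<Delta>)))"
    by (rule inj_on_subset[OF vert_inj]) (rule bsd_Union_fin[OF gk])
  then have gS: "good (bsd_iter (Suc k) \<Delta>) d" using good_img[OF gb ivv] by simp
  show ?case
  proof (intro conjI allI)
    show "good (bsd_iter (Suc k) \<Delta>) d" by (rule gS)
  next
    fix i
    have gb2: "good (bsd (bsd_iter (Suc k) \<Delta>)) d" by (rule good_bsd[OF gS])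
    have ivv: "inj_on vert (\<Union>(bsd (bsd_iter (Suc k) \<Delta>)))"
      by (rule inj_on_subset[OF vert_inj]) (rule bsd_Union_fin[OF gS])
    then have "fnum (bsd_iter (Suc (Suc k)) \<Delta>) i = fnum (bsd (bsd_iter (Suc k) \<Delta>)) i"
      using good_img[OF gb2 ivv, where i=i] by simp
    then show "fnum (bsd_iter (Suc (Suc k)) \<Delta>) i
           = (\<Sum>j\<le>d. fact (Suc i) * Stirling (Suc j) (Suc i) * fnum (bsd_iter (Suc k) \<Delta>) j)"
      using fnum_bsd[OF gS] by simp
  qed
qed

lemma iter0_fnum: "finite \<Delta> \<Longrightarrow> fnum (bsd_iter 0 \<Delta>) i = fnum \<Delta> i"
proof -
  assume f: "finite \<Delta>"
  have "inj_on (\<lambda>\<sigma>. V ` \<sigma>) \<Delta>"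
    by (rule inj_on_subset[OF inj_on_image_Pow[of V "\<Union>\<Delta>"]]) (auto simp: inj_on_def)
  moreover have "{s \<in> (\<lambda>\<sigma>. V ` \<sigma>) ` \<Delta>. card s = i + 1} = (\<lambda>\<sigma>. V ` \<sigma>) ` {\<sigma> \<in> \<Delta>. card \<sigma> = i + 1}"
    by (auto simp: card_image inj_on_def)
  ultimately show ?thesis unfolding fnum_def
    by (simp add: card_image inj_on_subset)
qed

declare Fbig.simps[simp del]

lemma fsmall_nat: "fsmall (int i) (int j) = fact (Suc i) * of_nat (Stirling (Suc j) (Suc i))"
  unfolding fsmall_def by simp

lemma Fbig_same: "Fbig (int d) (int d) = 1"
  by (subst Fbig.simps) simp

lemma Fbig_less:
  assumes "i < d"
  shows "Fbig (int i) (int d) = (1 / (fact (Suc d) - fact (Suc i))) *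
           (\<Sum>j\<in>{Suc i..d}. fsmall (int i) (int j) * Fbig (int j) (int d))"
proof -
  have "Fbig (int i) (int d) = (1 / (fact (nat (int d + 1)) - fact (nat (int i + 1)))) *
           (\<Sum>j\<in>{int i + 1..int d}. fsmall (int i) j * Fbig j (int d))"
    using assms by (subst Fbig.simps) simp
  also have "{int i + 1..int d} = int ` {Suc i..d}"
  proof (intro set_eqI iffI)
    fix x assume "x \<in> {int i + 1..int d}"
    then have "nat x \<in> {Suc i..d}" "x = int (nat x)" by auto
    then show "x \<in> int ` {Suc i..d}" by blast
  qed auto
  also have "(\<Sum>j\<in>int ` {Suc i..d}. fsmall (int i) j * Fbig j (int d)) =
      (\<Sum>j\<in>{Suc i..d}. fsmall (int i) (int j) * Fbig (int j) (int d))"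
    by (subst sum.reindex) (auto simp: inj_on_def)
  finally show ?thesis by (simp add: nat_add_distrib)
qed

lemma lin_rec:
  fixes f :: "nat \<Rightarrow> nat \<Rightarrow> rat" and d :: nat
  assumes rec: "\<And>k i. f (Suc k) i = (\<Sum>j\<le>d. fsmall (int i) (int j) * f k j)"
  shows "i \<le> d \<Longrightarrow> \<exists>C. (\<forall>l. d - i < l \<longrightarrow> C l = 0)
            \<and> (\<forall>k. f k i = (\<Sum>l\<le>d. C l * fact (d + 1 - l) ^ k))
            \<and> C 0 = f 0 d * Fbig (int i) (int d)"
proof (induction "d - i" arbitrary: i rule: less_induct)
  case less
  have rec2: "f (Suc k) i = fact (Suc i) * f k i + (\<Sum>j\<in>{Suc i..d}. fsmall (int i) (int j) * f k j)"
    if "i \<le> d" for k i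
  proof -
    have "f (Suc k) i = (\<Sum>j\<in>{i..d}. fsmall (int i) (int j) * f k j)"
      unfolding rec by (rule sum.mono_neutral_right) (auto simp: fsmall_nat)
    also have "\<dots> = fsmall (int i) (int i) * f k i + (\<Sum>j\<in>{Suc i..d}. fsmall (int i) (int j) * f k j)"
      using that by (rule sum.atLeast_Suc_atMost)
    finally show ?thesis by (simp add: fsmall_nat)
  qed
  show ?case
  proof (cases "i = d")
    case True
    have fd: "f k d = f 0 d * fact (d + 1) ^ k" for k
    proof (induction k)
      case (Suc k)
      have "f (Suc k) d = fact (Suc d) * f k d" using rec2[of d k] by simp
      then show ?case using Suc by simp
    qed simp
    define C where "C = (\<lambda>l::nat. if l = 0 then f 0 d else 0)"
    show ?thesis
    proof (intro exI[of _ C] conjI allI impI)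
      fix l assume "d - i < l" then show "C l = 0" unfolding C_def by simp
    next
      fix k
      have "(\<Sum>l\<le>d. C l * fact (d + 1 - l) ^ k) = (\<Sum>l\<le>d. if l = 0 then f 0 d * fact (d + 1) ^ k else 0)"
        by (rule sum.cong) (auto simp: C_def)
      also have "\<dots> = f 0 d * fact (d + 1) ^ k" by simp
      finally show "f k i = (\<Sum>l\<le>d. C l * fact (d + 1 - l) ^ k)" using True fd[of k] by simp
    next
      show "C 0 = f 0 d * Fbig (int i) (int d)" using True by (simp add: C_def Fbig_same)
    qed
  next
    case False
    with less.prems have id: "i < d" by simp
    define J where "J = {Suc i..d}"
    define P where "P = (\<lambda>j (C::nat\<Rightarrow>rat). (\<forall>l. d - j < l \<longrightarrow> C l = 0)
            \<and> (\<forall>k. f k j = (\<Sum>l\<le>d. C l * fact (d + 1 - l) ^ k))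
            \<and> C 0 = f 0 d * Fbig (int j) (int d))"
    have "\<forall>j\<in>J. \<exists>C. P j C"
    proof
      fix j assume "j \<in> J"
      then have "d - j < d - i" "j \<le> d" using id unfolding J_def by auto
      then show "\<exists>C. P j C" unfolding P_def using less.hyps by blast
    qed
    then obtain CC where CC: "\<And>j. j \<in> J \<Longrightarrow> P j (CC j)" by metis
    define a :: rat where "a = fact (Suc i)"
    define lam :: "nat \<Rightarrow> rat" where "lam = (\<lambda>l. fact (d + 1 - l))"
    define D where "D = (\<lambda>l. \<Sum>j\<in>J. fsmall (int i) (int j) * CC j l)"
    define E where "E = (\<lambda>l. if l < d - i then D l / (lam l - a) else 0)"
    define R where "R = f 0 i - (\<Sum>l\<le>d. E l)"
    define C where "C = (\<lambda>l. if l = d - i then R else E l)"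
    have D0: "D l = 0" if "d - i \<le> l" for l
      unfolding D_def
    proof (rule sum.neutral, intro ballI)
      fix j assume j: "j \<in> J"
      then have "d - j < l" using that id unfolding J_def by auto
      then show "fsmall (int i) (int j) * CC j l = 0" using CC[OF j] unfolding P_def by simp
    qed
    have lam_ne: "lam l \<noteq> a" if "l < d - i" for l
    proof -
      have "a < lam l" unfolding a_def lam_def by (rule fact_less_mono) (use that in auto)
      then show ?thesis by simp
    qed
    have key: "a * E l + D l = E l * lam l" for l
    proof (cases "l < d - i")
      case True
      then have "lam l - a \<noteq> 0" using lam_ne by simp
      then show ?thesis unfolding E_def using True by (simp add: field_simps)
    next
      case False then show ?thesis unfolding E_def using D0 by simp
    qed
    have fsum: "(\<Sum>j\<in>J. fsmall (int i) (int j) * f k j) = (\<Sum>l\<le>d. D l * lam l ^ k)" for k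
    proof -
      have "(\<Sum>j\<in>J. fsmall (int i) (int j) * f k j)
          = (\<Sum>j\<in>J. fsmall (int i) (int j) * (\<Sum>l\<le>d. CC j l * lam l ^ k))"
        by (rule sum.cong[OF refl]) (use CC in \<open>simp add: P_def lam_def\<close>)
      also have "\<dots> = (\<Sum>j\<in>J. \<Sum>l\<le>d. fsmall (int i) (int j) * CC j l * lam l ^ k)"
        by (simp add: sum_distrib_left mult.assoc)
      also have "\<dots> = (\<Sum>l\<le>d. \<Sum>j\<in>J. fsmall (int i) (int j) * CC j l * lam l ^ k)"
        by (rule sum.swap)
      also have "\<dots> = (\<Sum>l\<le>d. D l * lam l ^ k)"
        unfolding D_def by (simp add: sum_distrib_right)
      finally show ?thesis .
    qed
    have closed: "f k i = (\<Sum>l\<le>d. E l * lam l ^ k) + R * a ^ k" for k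
    proof (induction k)
      case 0 then show ?case unfolding R_def by simp
    next
      case (Suc k)
      have "f (Suc k) i = a * f k i + (\<Sum>l\<le>d. D l * lam l ^ k)"
        using rec2[of i k] id fsum unfolding a_def J_def by simp
      also have "\<dots> = (\<Sum>l\<le>d. (a * E l + D l) * lam l ^ k) + R * a ^ Suc k"
        unfolding Suc by (simp add: algebra_simps sum_distrib_left sum.distrib)
      also have "\<dots> = (\<Sum>l\<le>d. E l * lam l ^ Suc k) + R * a ^ Suc k"
        unfolding key by (simp add: mult.assoc)
      finally show ?case .
    qed
    show ?thesis
    proof (intro exI[of _ C] conjI allI impI)
      fix l assume "d - i < l" then show "C l = 0" unfolding C_def E_def by simp
    next
      fix k
      have "(\<Sum>l\<le>d. C l * fact (d + 1 - l) ^ k)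
          = (\<Sum>l\<le>d. E l * lam l ^ k + (if l = d - i then R * a ^ k else 0))"
      proof (rule sum.cong[OF refl])
        fix l assume "l \<in> {..d}"
        show "C l * fact (d + 1 - l) ^ k = E l * lam l ^ k + (if l = d - i then R * a ^ k else 0)"
        proof (cases "l = d - i")
          case True
          then have "d + 1 - l = Suc i" using id by simp
          then show ?thesis using True unfolding C_def E_def lam_def a_def by simp
        next
          case False then show ?thesis unfolding C_def lam_def by simp
        qed
      qed
      also have "\<dots> = (\<Sum>l\<le>d. E l * lam l ^ k) + R * a ^ k"
        by (simp add: sum.distrib)
      finally show "f k i = (\<Sum>l\<le>d. C l * fact (d + 1 - l) ^ k)" using closed[of k] by simp
    next
      have "0 < d - i" using id by simp
      then have "C 0 = D 0 / (lam 0 - a)" unfolding C_def E_def by simp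
      also have "D 0 = f 0 d * (\<Sum>j\<in>J. fsmall (int i) (int j) * Fbig (int j) (int d))"
        unfolding D_def sum_distrib_left
        by (rule sum.cong[OF refl]) (use CC in \<open>simp add: P_def\<close>)
      finally show "C 0 = f 0 d * Fbig (int i) (int d)"
        unfolding Fbig_less[OF id] J_def lam_def a_def by simp
    qed
  qed
qed

lemma of_rat_fact: "real_of_rat (fact n) = fact n"
  by (metis of_nat_fact of_rat_of_nat_eq)

theorem lemma2p8:
  fixes \<Delta> :: "'a set set" and d i :: nat
  assumes "finite \<Delta>" and "simplicial_complex \<Delta>" and "has_dim \<Delta> d" and "i \<le> d"
  shows "(\<exists>C :: nat \<Rightarrow> rat.
           (\<forall>k. of_nat (fnum (bsd_iter k \<Delta>) i) = (\<Sum>j\<le>d - i. C j * (fact (d + 1 - j)) ^ k))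
         \<and> C 0 = of_nat (fnum \<Delta> d) * Fbig (int i) (int d))
         \<and> (\<lambda>k. real (fnum (bsd_iter k \<Delta>) i)
              - real (fnum \<Delta> d) * real_of_rat (Fbig (int i) (int d)) * (fact (d + 1)) ^ k)
           \<in> O(\<lambda>k. (fact d) ^ k)"
proof -
  have g: "good \<Delta> d" using assms unfolding good_def has_dim_def by auto
  define f where "f = (\<lambda>k j. (of_nat (fnum (bsd_iter k \<Delta>) j) :: rat))"
  have rec: "f (Suc k) j = (\<Sum>l\<le>d. fsmall (int j) (int l) * f k l)" for k j
  proof -
    have h: "fnum (bsd_iter (Suc k) \<Delta>) j
        = (\<Sum>l\<le>d. fact (Suc j) * Stirling (Suc l) (Suc j) * fnum (bsd_iter k \<Delta>) l)"
      using iter_props[OF g, of k] by blast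
    show ?thesis unfolding f_def h of_nat_sum
      by (rule sum.cong[OF refl]) (simp only: fsmall_nat of_nat_mult of_nat_fact)
  qed
  obtain C where C0: "\<forall>l. d - i < l \<longrightarrow> C l = 0"
    and Ck: "\<forall>k. f k i = (\<Sum>l\<le>d. C l * fact (d + 1 - l) ^ k)"
    and Cz: "C 0 = f 0 d * Fbig (int i) (int d)"
    using lin_rec[of f d, OF rec, of i] assms(4) by blast
  have f0: "f 0 d = of_nat (fnum \<Delta> d)" unfolding f_def using iter0_fnum[OF assms(1)] by simp
  have repr: "of_nat (fnum (bsd_iter k \<Delta>) i) = (\<Sum>j\<le>d - i. C j * (fact (d + 1 - j)) ^ k)" for k
  proof -
    have "of_nat (fnum (bsd_iter k \<Delta>) i) = (\<Sum>l\<le>d. C l * fact (d + 1 - l) ^ k)"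
      using Ck unfolding f_def by simp
    also have "\<dots> = (\<Sum>j\<le>d - i. C j * (fact (d + 1 - j)) ^ k)"
      by (rule sum.mono_neutral_right) (use C0 in auto)
    finally show ?thesis .
  qed
  have part1: "\<exists>C :: nat \<Rightarrow> rat.
           (\<forall>k. of_nat (fnum (bsd_iter k \<Delta>) i) = (\<Sum>j\<le>d - i. C j * (fact (d + 1 - j)) ^ k))
         \<and> C 0 = of_nat (fnum \<Delta> d) * Fbig (int i) (int d)"
    using repr Cz f0 by auto
  define c where "c = (\<lambda>l. real_of_rat (C l))"
  define n where "n = d - i"
  have diff: "real (fnum (bsd_iter k \<Delta>) i)
              - real (fnum \<Delta> d) * real_of_rat (Fbig (int i) (int d)) * (fact (d + 1)) ^ k
         = (\<Sum>l\<in>{Suc 0..n}. c l * fact (d + 1 - l) ^ k)" for k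
  proof -
    have "real (fnum (bsd_iter k \<Delta>) i) = real_of_rat (of_nat (fnum (bsd_iter k \<Delta>) i))"
      by (simp add: of_rat_of_nat_eq)
    also have "\<dots> = (\<Sum>l\<le>n. c l * fact (d + 1 - l) ^ k)"
      unfolding repr c_def n_def by (simp add: of_rat_sum of_rat_mult of_rat_power of_rat_fact)
    also have "\<dots> = (\<Sum>l\<in>{0..n}. c l * fact (d + 1 - l) ^ k)"
      by (simp add: atMost_atLeast0)
    also have "\<dots> = c 0 * fact (d + 1) ^ k + (\<Sum>l\<in>{Suc 0..n}. c l * fact (d + 1 - l) ^ k)"
      by (subst sum.atLeast_Suc_atMost) simp_all
    also have "c 0 = real (fnum \<Delta> d) * real_of_rat (Fbig (int i) (int d))"
      unfolding c_def Cz f0 by (simp add: of_rat_mult of_rat_of_nat_eq)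
    finally show ?thesis by simp
  qed
  define K where "K = (\<Sum>l\<in>{Suc 0..n}. \<bar>c l\<bar>)"
  have bound: "norm (\<Sum>l\<in>{Suc 0..n}. c l * fact (d + 1 - l) ^ k) \<le> K * norm ((fact d :: real) ^ k)" for k
  proof -
    have "norm (\<Sum>l\<in>{Suc 0..n}. c l * fact (d + 1 - l) ^ k) \<le> (\<Sum>l\<in>{Suc 0..n}. norm (c l * fact (d + 1 - l) ^ k))"
      by (rule norm_sum)
    also have "\<dots> \<le> (\<Sum>l\<in>{Suc 0..n}. \<bar>c l\<bar> * (fact d) ^ k)"
    proof (rule sum_mono)
      fix l assume l: "l \<in> {Suc 0..n}"
      have "(fact (d + 1 - l) :: real) \<le> fact d" using l by (intro fact_mono) auto
      then have "(fact (d + 1 - l) :: real) ^ k \<le> fact d ^ k" by (intro power_mono) auto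
      then show "norm (c l * fact (d + 1 - l) ^ k) \<le> \<bar>c l\<bar> * (fact d) ^ k"
        by (simp add: abs_mult mult_left_mono)
    qed
    also have "\<dots> = K * norm ((fact d :: real) ^ k)"
      unfolding K_def by (simp add: sum_distrib_right)
    finally show ?thesis .
  qed
  have "(\<lambda>k. real (fnum (bsd_iter k \<Delta>) i)
              - real (fnum \<Delta> d) * real_of_rat (Fbig (int i) (int d)) * (fact (d + 1)) ^ k)
           \<in> O(\<lambda>k. (fact d) ^ k)"
    unfolding diff by (rule bigoI[of _ K]) (use bound in \<open>simp add: always_eventually\<close>)
  with part1 show ?thesis by blast
qed

end
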